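(* Let $X$ be a Banach space, $H$ a Hilbert space, $T\in\mathcal L(X,H)$, $f\in H$, $J$ a seminorm on $X$ such that all Tikhonov functionals below have minimizers, and $(\lambda_k)$ an increasing sequence of positive parameters. Fix $k$ and assume that the MHDM iterate $x_k$ coincides with a chosen minimizer $x_{\lambda_k}$ of $x\mapsto\frac{\lambda_k}{2}\|Tx-f\|^2+J(x)$. Let $x_{\lambda_{k+1}}$ be a minimizer of $x\mapsto\frac{\lambda_{k+1}}{2}\|Tx-f\|^2+J(x)$ and $\xi_{\lambda_{k+1}}=\lambda_{k+1}T^*(f-Tx_{\lambda_{k+1}})\in\partial J(x_{\lambda_{k+1}})$. Then $$x_{\lambda_{k+1}}\in\arg\min_{x\in X}\Big\{\frac{\lambda_{k+1}}{2}\|Tx-f\|^2+J(x-x_k)\Big\}$$ if and only if $$D_J^{\xi_{\lambda_{k+1}}}(x_{\lambda_{k+1}}-x_{\lambda_k},x_{\lambda_{k+1}})=J(x_{\lambda_{k+1}}-x_{\lambda_k})-J(x_{\lambda_{k+1}})+\langle\xi_{\lambda_{k+1}},x_{\lambda_k}\rangle=0.$$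
   Context: Seminorm: $J:X\to[0,\infty]$ with $J(\alpha x)=|\alpha|J(x)$, $J(x+y)\le J(x)+J(y)$. Subgradient: $\partial J(x_0)=\{x^*\in X^*:\langle x^*,x-x_0\rangle\le J(x)-J(x_0)\ \forall x\}$; Bregman distance $D_J^{x^*}(x_1,x_0)=J(x_1)-J(x_0)-\langle x^*,x_1-x_0\rangle$ for $x^*\in\partial J(x_0)$. MHDM: $x_0\in\arg\min_x\frac{\lambda_0}{2}\|Tx-f\|^2+J(x)$, and for $k\ge1$, $x_k\in\arg\min_x\frac{\lambda_k}{2}\|Tx-f\|^2+J(x-x_{k-1})$. *)

theory Defs
  imports "HOL-Analysis.Analysis" "HOL-Library.Extended_Real"
begin

definition ext_seminorm :: "('a::real_vector \<Rightarrow> ereal) \<Rightarrow> bool" where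
  "ext_seminorm J \<longleftrightarrow>
     (\<forall>x. 0 \<le> J x) \<and>
     (\<forall>(\<alpha>::real) x. J (\<alpha> *\<^sub>R x) = ereal \<bar>\<alpha>\<bar> * J x) \<and>
     (\<forall>x y. J (x + y) \<le> J x + J y)"

definition tikh :: "('a::real_normed_vector \<Rightarrow> 'b::real_normed_vector) \<Rightarrow> 'b \<Rightarrow> ('a \<Rightarrow> ereal)
                     \<Rightarrow> real \<Rightarrow> 'a \<Rightarrow> 'a \<Rightarrow> ereal" where
  "tikh T f J lam z x = ereal (lam / 2 * (norm (T x - f))\<^sup>2) + J (x - z)"

definition argmin_set :: "('a \<Rightarrow> ereal) \<Rightarrow> 'a set" where
  "argmin_set F = {x. \<forall>y. F x \<le> F y}"

definition bregman :: "('a::real_vector \<Rightarrow> ereal) \<Rightarrow> ('a \<Rightarrow> real) \<Rightarrow> 'a \<Rightarrow> 'a \<Rightarrow> ereal" where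
  "bregman J \<xi> x1 x0 = J x1 - J x0 - ereal (\<xi> (x1 - x0))"

end

theory Submission
  imports Defs
begin

lemma qexp:
  assumes T: "linear T"
  shows "mu/2*(norm(T(z + t *\<^sub>R v) - g))\<^sup>2 =
         mu/2*(norm(T z - g))\<^sup>2 - t*(mu*inner(g - T z)(T v)) + t\<^sup>2*(mu/2*(norm(T v))\<^sup>2)"
proof -
  have e: "T(z + t *\<^sub>R v) - g = (T z - g) + t *\<^sub>R T v"
    using T by (simp add: linear_add linear_scale algebra_simps)
  show ?thesis unfolding e power2_norm_eq_inner
    by (simp add: inner_add_left inner_add_right inner_diff_left inner_diff_right
        inner_commute algebra_simps power2_eq_square)
qed

lemma eps_le:
  fixes A B C :: real
  assumes "C \<ge> 0" "\<And>t. 0 < t \<Longrightarrow> t \<le> 1 \<Longrightarrow> A \<le> B + t * C"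
  shows "A \<le> B"
proof (rule ccontr)
  assume "\<not> A \<le> B"
  define t where "t = min 1 ((A - B) / (2*C + 1))"
  have t0: "0 < t" "t \<le> 1" using \<open>\<not> A \<le> B\<close> assms(1) by (auto simp: t_def)
  have "t * C \<le> (A - B) / (2*C+1) * C"
    using assms(1) by (intro mult_right_mono) (auto simp: t_def)
  also have "\<dots> < A - B"
  proof -
    have "C / (2*C+1) < 1" using assms(1) by (simp add: field_simps)
    hence "(A - B) * (C / (2*C+1)) < (A - B) * 1"
      using \<open>\<not> A \<le> B\<close> by (intro mult_strict_left_mono) auto
    thus ?thesis by simp
  qed
  finally show False using assms(2)[OF t0] by linarith
qed

lemma J0: "ext_seminorm J \<Longrightarrow> J 0 = 0"
  unfolding ext_seminorm_def by (metis abs_zero ereal_zero_mult scaleR_zero_left zero_ereal_def)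

lemma key:
  fixes T :: "'a::real_normed_vector \<Rightarrow> 'b::real_inner"
  assumes T: "linear T" and J: "ext_seminorm J" and mu: "0 < mu"
    and min: "\<forall>y. ereal(mu/2*(norm(T z - g))\<^sup>2) + J z \<le> ereal(mu/2*(norm(T y - g))\<^sup>2) + J y"
  shows "\<forall>v. ereal(mu*inner(g - T z)(T v)) \<le> J v"
    and "J z = ereal(mu*inner(g - T z)(T z))"
proof -
  define q where "q y = mu/2*(norm(T y - g))\<^sup>2" for y
  define \<xi> where "\<xi> v = mu*inner(g - T z)(T v)" for v
  have Jnn: "\<And>x. 0 \<le> J x" and Jsc: "\<And>a x. J (a *\<^sub>R x) = ereal \<bar>a\<bar> * J x"
    and Jtri: "\<And>x y. J (x+y) \<le> J x + J y" using J unfolding ext_seminorm_def by auto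
  have m: "\<And>y. ereal (q z) + J z \<le> ereal (q y) + J y" using min by (simp add: q_def)
  have "ereal (q z) + J z \<le> ereal (q 0) + 0" using m[of 0] J0[OF J] by simp
  hence "J z \<noteq> \<infinity>" by auto
  then obtain r where r: "J z = ereal r" using Jnn[of z] by (cases "J z") auto
  have qe: "\<And>t v. q (z + t *\<^sub>R v) = q z - t * \<xi> v + t\<^sup>2 * (mu/2*(norm(T v))\<^sup>2)"
    unfolding q_def \<xi>_def by (rule qexp[OF T])
  have C0: "\<And>v. 0 \<le> mu/2*(norm(T v))\<^sup>2" using mu by simp
  show A: "\<forall>v. ereal(mu*inner(g - T z)(T v)) \<le> J v"
  proof
    fix v
    show "ereal(mu*inner(g - T z)(T v)) \<le> J v"
    proof (cases "J v")
      case (real s)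
      have "\<xi> v \<le> s"
      proof (rule eps_le[OF C0])
        fix t :: real assume t: "0 < t" "t \<le> 1"
        have "J (z + t *\<^sub>R v) \<le> J z + J (t *\<^sub>R v)" by (rule Jtri)
        also have "\<dots> = ereal (r + t * s)" using r real t Jsc[of t v] by simp
        finally have Jzt: "J (z + t *\<^sub>R v) \<le> ereal (r + t * s)" .
        have "ereal (q z) + ereal r \<le> ereal (q (z + t *\<^sub>R v)) + J (z + t *\<^sub>R v)"
          using m[of "z + t *\<^sub>R v"] r by simp
        also have "\<dots> \<le> ereal (q (z + t *\<^sub>R v)) + ereal (r + t * s)"
          using Jzt by (rule add_left_mono)
        finally have "ereal (q z) + ereal r \<le> ereal (q (z + t *\<^sub>R v)) + ereal (r + t * s)" .
        hence "q z + r \<le> q (z + t *\<^sub>R v) + (r + t * s)" by simp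
        hence "0 \<le> t * (s - \<xi> v + t * (mu/2*(norm(T v))\<^sup>2))"
          unfolding qe by (simp add: algebra_simps power2_eq_square)
        hence "0 \<le> s - \<xi> v + t * (mu/2*(norm(T v))\<^sup>2)" using t
          by (simp add: zero_le_mult_iff)
        thus "\<xi> v \<le> s + t * (mu/2*(norm(T v))\<^sup>2)" by simp
      qed
      thus ?thesis using real by (simp add: \<xi>_def)
    next
      case MInf thus ?thesis using Jnn[of v] by simp
    qed auto
  qed
  have "r \<le> \<xi> z"
  proof (rule eps_le[OF C0])
    fix t :: real assume t: "0 < t" "t \<le> 1"
    have "J (z + (-t) *\<^sub>R z) = J ((1 - t) *\<^sub>R z)" by (simp add: algebra_simps)
    also have "\<dots> = ereal ((1-t) * r)" using Jsc[of "1-t" z] r t by simp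
    finally have "ereal (q z) + ereal r \<le> ereal (q (z + (-t) *\<^sub>R z)) + ereal ((1-t)*r)"
      using m[of "z + (-t) *\<^sub>R z"] r by simp
    hence "q z + r \<le> q (z + (-t) *\<^sub>R z) + (1-t)*r" by simp
    hence "0 \<le> t * (\<xi> z - r + t * (mu/2*(norm(T z))\<^sup>2))"
      unfolding qe by (simp add: algebra_simps power2_eq_square)
    hence "0 \<le> \<xi> z - r + t * (mu/2*(norm(T z))\<^sup>2)" using t
      by (simp add: zero_le_mult_iff)
    thus "r \<le> \<xi> z + t * (mu/2*(norm(T z))\<^sup>2)" by simp
  qed
  moreover have "\<xi> z \<le> r"
  proof -
    have "ereal (\<xi> z) \<le> J z" using A by (simp add: \<xi>_def)
    thus ?thesis using r by simp
  qed
  ultimately show "J z = ereal(mu*inner(g - T z)(T z))" using r by (simp add: \<xi>_def)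
qed

theorem mainTheorem10:
  fixes T :: "'a::banach \<Rightarrow> 'b::{real_inner, complete_space}"
    and f :: 'b and J :: "'a \<Rightarrow> ereal"
    and lam :: "nat \<Rightarrow> real" and x :: "nat \<Rightarrow> 'a"
    and k :: nat and xl xl' :: 'a
  assumes T: "bounded_linear T"
    and J: "ext_seminorm J"
    and exist: "\<forall>\<mu>>0. \<forall>z. argmin_set (tikh T f J \<mu> z) \<noteq> {}"
    and lam_pos: "\<forall>j. 0 < lam j"
    and lam_inc: "incseq lam"
    and mhdm0: "x 0 \<in> argmin_set (tikh T f J (lam 0) 0)"
    and mhdmS: "\<forall>j. x (Suc j) \<in> argmin_set (tikh T f J (lam (Suc j)) (x j))"
    and xl: "xl \<in> argmin_set (tikh T f J (lam k) 0)"
    and xk: "x k = xl"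
    and xl': "xl' \<in> argmin_set (tikh T f J (lam (Suc k)) 0)"
  shows "xl' \<in> argmin_set (tikh T f J (lam (Suc k)) (x k)) \<longleftrightarrow>
         bregman J (\<lambda>v. lam (Suc k) * inner (f - T xl') (T v)) (xl' - xl) xl' = 0"
proof -
  define mu where "mu = lam (Suc k)"
  have mu: "0 < mu" using lam_pos by (simp add: mu_def)
  have lin: "linear T" using T bounded_linear.linear by blast
  define a where "a = xl'"
  define b where "b = xl"
  define q where "q y = mu/2*(norm(T y - f))\<^sup>2" for y
  define \<xi> where "\<xi> v = mu*inner(f - T a)(T v)" for v
  have \<xi>lin: "\<And>u v. \<xi> (u - v) = \<xi> u - \<xi> v" "\<And>v. \<xi> (- v) = - \<xi> v"
    unfolding \<xi>_def using lin by (simp_all add: linear_diff linear_neg inner_diff_right algebra_simps)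
  have ma: "\<forall>y. ereal(mu/2*(norm(T a - f))\<^sup>2) + J a \<le> ereal(mu/2*(norm(T y - f))\<^sup>2) + J y"
    using xl' by (simp add: argmin_set_def tikh_def mu_def a_def)
  note K = key[OF lin J mu ma]
  have Ja: "J a = ereal (\<xi> a)" using K(2) by (simp add: \<xi>_def)
  have Jle: "\<And>v. ereal (\<xi> v) \<le> J v" using K(1) by (simp add: \<xi>_def)
  have br: "bregman J (\<lambda>v. lam (Suc k) * inner (f - T xl') (T v)) (xl' - xl) xl'
       = J (a - b) - ereal (\<xi> a) - ereal (- \<xi> b)"
    unfolding bregman_def by (simp add: Ja[symmetric] \<xi>_def[symmetric] mu_def[symmetric]
        a_def[symmetric] b_def[symmetric] \<xi>lin(2)[symmetric])
  have am: "xl' \<in> argmin_set (tikh T f J (lam (Suc k)) (x k)) \<longleftrightarrow>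
        (\<forall>y. ereal (q a) + J (a - b) \<le> ereal (q y) + J (y - b))"
    by (simp add: argmin_set_def tikh_def mu_def a_def b_def q_def xk)
  show ?thesis unfolding br am
  proof
    assume H: "\<forall>y. ereal (q a) + J (a - b) \<le> ereal (q y) + J (y - b)"
    have "\<forall>y. ereal(mu/2*(norm(T (a-b) - (f - T b)))\<^sup>2) + J (a-b)
              \<le> ereal(mu/2*(norm(T y - (f - T b)))\<^sup>2) + J y"
    proof
      fix y
      have e1: "T (a-b) - (f - T b) = T a - f" using lin by (simp add: linear_diff)
      have e2: "T y - (f - T b) = T (y + b) - f" using lin by (simp add: linear_add algebra_simps)
      show "ereal(mu/2*(norm(T (a-b) - (f - T b)))\<^sup>2) + J (a-b)
              \<le> ereal(mu/2*(norm(T y - (f - T b)))\<^sup>2) + J y"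
        using H[rule_format, of "y + b"] unfolding e1 e2 by (simp add: q_def)
    qed
    from key(2)[OF lin J mu this]
    have "J (a - b) = ereal (\<xi> (a - b))"
      using lin by (simp add: \<xi>_def linear_diff algebra_simps)
    thus "J (a - b) - ereal (\<xi> a) - ereal (- \<xi> b) = 0" by (simp add: \<xi>lin)
  next
    assume H: "J (a - b) - ereal (\<xi> a) - ereal (- \<xi> b) = 0"
    have "J (a - b) = ereal (\<xi> (a - b))"
      using H by (cases "J (a - b)") (auto simp: \<xi>lin)
    show "\<forall>y. ereal (q a) + J (a - b) \<le> ereal (q y) + J (y - b)"
    proof
      fix y
      have qe: "q y = q a - \<xi> (y - a) + (mu/2*(norm(T (y - a)))\<^sup>2)"
        using qexp[OF lin, of mu a 1 "y - a" f] by (simp add: q_def \<xi>_def)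
      have "q a + \<xi> (a - b) \<le> q y + \<xi> (y - b)"
        unfolding qe using mu by (simp add: \<xi>lin)
      hence "ereal (q a) + J (a - b) \<le> ereal (q y) + ereal (\<xi> (y - b))"
        using \<open>J (a - b) = _\<close> by simp
      also have "\<dots> \<le> ereal (q y) + J (y - b)" using Jle[of "y - b"] by (rule add_left_mono)
      finally show "ereal (q a) + J (a - b) \<le> ereal (q y) + J (y - b)" .
    qed
  qed
qed

end
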